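(* Let $M(C,\bar\xi,\pi)$ be a Myller configuration with Darboux frame $(\bar\xi,\bar\mu,\bar v)$ and invariants $G,K,T$, with $(G(s),T(s))\neq(0,0)$ for all $s$. Define $$\sigma_\mu=\frac{G^{2}\left(\frac{T}{G}\right)'-(G^{2}+T^{2})K}{(G^{2}+T^{2})^{3/2}},$$ where $G^2\left(\frac{T}{G}\right)'$ stands for $T'G-TG'$. Then $C$ is a $\bar\mu$-helix in $M$ if and only if $\sigma_\mu$ is constant; in that case the constant angle $\eta$ between $\bar\mu$ and the axis satisfies $\cot\eta=\mp\sigma_\mu$ (for an appropriate sign).
   Context: Let $C$ be a smooth curve in $E^3$ parametrized by arclength $s$; primes denote $d/ds$. A Myller configuration $M(C,\bar\xi,\pi)$ consists of a smooth unit vector field $\bar\xi$ along $C$ and a smooth oriented plane field $\pi$ with $\bar\xi\in\pi$; $\bar v$ is the unit normal of $\pi$, $\bar\mu=\bar v\times\bar\xi$, and the Darboux frame satisfies $\bar\xi'=G\bar\mu+K\bar v$, $\bar\mu'=-G\bar\xi+T\bar v$, $\bar v'=-K\bar\xi-T\bar\mu$. $C$ is a $\bar\mu$-helix in $M$ if there are a constant unit vector $\bar d_\mu$ and a constant $\eta$ with $\langle\bar\mu,\bar d_\mu\rangle=\cos\eta$ along $C$. *)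

theory Defs
  imports "HOL-Analysis.Analysis" "HOL-Analysis.Cross3"
begin

text \<open>A Myller configuration M(C, xi, pi) along a curve C (position r, arclength
parameter s ranging over the interval I), with Darboux frame (xi, mu, v):
xi unit tangent field of the configuration, v unit normal of the plane field pi,
mu = v x xi, and invariants G, K, T given by the Darboux equations.\<close>

definition myller_configuration ::
  "real set \<Rightarrow> (real \<Rightarrow> real^3) \<Rightarrow> (real \<Rightarrow> real^3) \<Rightarrow> (real \<Rightarrow> real^3) \<Rightarrow> (real \<Rightarrow> real^3)
   \<Rightarrow> (real \<Rightarrow> real) \<Rightarrow> (real \<Rightarrow> real) \<Rightarrow> (real \<Rightarrow> real) \<Rightarrow> bool" where
  "myller_configuration I r xi mu v G K T \<longleftrightarrow>
     (\<forall>s\<in>I.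
        (\<exists>t. (r has_vector_derivative t) (at s) \<and> norm t = 1) \<and>
        norm (xi s) = 1 \<and> norm (v s) = 1 \<and> xi s \<bullet> v s = 0 \<and>
        mu s = cross3 (v s) (xi s) \<and>
        (xi has_vector_derivative (G s *\<^sub>R mu s + K s *\<^sub>R v s)) (at s) \<and>
        (mu has_vector_derivative (- G s *\<^sub>R xi s + T s *\<^sub>R v s)) (at s) \<and>
        (v has_vector_derivative (- K s *\<^sub>R xi s - T s *\<^sub>R mu s)) (at s))"

definition mu_helix_axis :: "real set \<Rightarrow> (real \<Rightarrow> real^3) \<Rightarrow> real^3 \<Rightarrow> real \<Rightarrow> bool" where
  "mu_helix_axis I mu d \<eta> \<longleftrightarrow> norm d = 1 \<and> (\<forall>s\<in>I. mu s \<bullet> d = cos \<eta>)"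

definition mu_helix :: "real set \<Rightarrow> (real \<Rightarrow> real^3) \<Rightarrow> bool" where
  "mu_helix I mu \<longleftrightarrow> (\<exists>d \<eta>. mu_helix_axis I mu d \<eta>)"

definition sigma_mu :: "(real \<Rightarrow> real) \<Rightarrow> (real \<Rightarrow> real) \<Rightarrow> (real \<Rightarrow> real) \<Rightarrow> real \<Rightarrow> real" where
  "sigma_mu G K T s =
     (deriv T s * G s - T s * deriv G s - ((G s)\<^sup>2 + (T s)\<^sup>2) * K s)
       / ((G s)\<^sup>2 + (T s)\<^sup>2) powr (3/2)"

end

theory Submission imports Defs begin

lemma bac_cab: "cross3 x (cross3 y z) = (x \<bullet> z) *\<^sub>R y - (x \<bullet> y) *\<^sub>R z"
  by (rule Lagrange)

lemma frame:
  fixes xi v mu d :: "real^3"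
  assumes "norm xi = 1" "norm v = 1" "xi \<bullet> v = 0" "mu = cross3 v xi"
  shows "norm mu = 1" "mu \<bullet> xi = 0" "mu \<bullet> v = 0"
    "d = (d \<bullet> xi) *\<^sub>R xi + (d \<bullet> mu) *\<^sub>R mu + (d \<bullet> v) *\<^sub>R v"
proof -
  have n: "(norm mu)\<^sup>2 = 1" using norm_cross_dot[of v xi] assms by (simp add: inner_commute)
  then show nm: "norm mu = 1" using norm_ge_zero[of mu] by (simp add: power2_eq_1_iff)
  show o1: "mu \<bullet> xi = 0" "mu \<bullet> v = 0" using assms dot_cross_self by auto
  define w where "w = d - (d \<bullet> xi) *\<^sub>R xi - (d \<bullet> mu) *\<^sub>R mu - (d \<bullet> v) *\<^sub>R v"
  have xx: "xi \<bullet> xi = 1" "v \<bullet> v = 1" "mu \<bullet> mu = 1" using assms nm by (simp_all add: norm_eq_1)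
  have w1: "w \<bullet> xi = 0" "w \<bullet> v = 0" "w \<bullet> mu = 0"
    using xx o1 assms(3) by (simp_all add: w_def algebra_simps inner_commute)
  have "cross3 w mu = 0" using bac_cab[of w v xi] w1 assms(4) by simp
  hence "cross3 mu (cross3 w mu) = 0" by simp
  hence "w = 0" using bac_cab[of mu w mu] xx w1 by (simp add: inner_commute)
  thus "d = (d \<bullet> xi) *\<^sub>R xi + (d \<bullet> mu) *\<^sub>R mu + (d \<bullet> v) *\<^sub>R v"
    by (simp add: w_def algebra_simps)
qed

lemma inner_deriv:
  fixes f :: "real \<Rightarrow> real^3"
  assumes "(f has_vector_derivative f') (at s)"
  shows "((\<lambda>s. f s \<bullet> d) has_real_derivative (f' \<bullet> d)) (at s)"
  using bounded_linear.has_vector_derivative[OF bounded_linear_inner_left assms, of d]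
  by (simp add: has_real_derivative_iff_has_vector_derivative)

lemma sign_const:
  fixes f :: "real \<Rightarrow> real"
  assumes "is_interval I" "\<forall>s\<in>I. isCont f s" "\<forall>s\<in>I. f s \<noteq> 0" "s1 \<in> I" "s2 \<in> I" "f s1 > 0"
  shows "f s2 > 0"
proof (rule ccontr)
  assume "\<not> f s2 > 0"
  hence neg: "f s2 < 0" using assms(3,5) by force
  have sub: "\<And>a b. a \<in> I \<Longrightarrow> b \<in> I \<Longrightarrow> {a..b} \<subseteq> I"
    using assms(1) unfolding is_interval_1 by (metis atLeastAtMost_iff subsetI)
  have cont: "\<And>a b. a \<in> I \<Longrightarrow> b \<in> I \<Longrightarrow> continuous_on {a..b} f"
    by (intro continuous_at_imp_continuous_on) (use sub assms(2) in blast)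
  show False
  proof (cases "s1 \<le> s2")
    case True
    obtain x where "x \<ge> s1" "x \<le> s2" "f x = 0"
      using IVT2'[of f s2 0 s1] neg assms(6) True cont[OF assms(4,5)] by force
    thus False using sub[OF assms(4,5)] assms(3) by auto
  next
    case False
    obtain x where "x \<ge> s2" "x \<le> s1" "f x = 0"
      using IVT'[of f s2 0 s1] neg assms(6) False cont[OF assms(5,4)] by force
    thus False using sub[OF assms(5,4)] assms(3) by auto
  qed
qed

lemma powr32: "(x::real) > 0 \<Longrightarrow> x powr (3/2) = x * sqrt x"
proof -
  assume "x > 0"
  have "x powr (3/2) = x powr (1 + 1/2)" by simp
  also have "\<dots> = x * x powr (1/2)" using \<open>x > 0\<close> by (simp only: powr_add powr_one_gt_zero_iff powr_one)
  also have "\<dots> = x * sqrt x" using \<open>x > 0\<close> by (simp add: powr_half_sqrt)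
  finally show ?thesis .
qed
lemma fwd:
  fixes I :: "real set"
    and r xi mu v :: "real \<Rightarrow> real^3"
    and G K T :: "real \<Rightarrow> real"
  assumes I: "is_interval I" "open I" "I \<noteq> {}"
    and M: "myller_configuration I r xi mu v G K T"
    and smooth: "\<forall>s\<in>I. G differentiable (at s) \<and> T differentiable (at s) \<and> isCont K s"
    and GT: "\<forall>s\<in>I. (G s, T s) \<noteq> (0, 0)"
    and ax: "mu_helix_axis I mu d \<eta>"
  shows "(\<forall>s\<in>I. cot \<eta> = sigma_mu G K T s) \<or> (\<forall>s\<in>I. cot \<eta> = - sigma_mu G K T s)"
proof -
  define N where "N s = (G s)\<^sup>2 + (T s)\<^sup>2" for s
  define a where "a s = xi s \<bullet> d" for s
  define c where "c s = v s \<bullet> d" for s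
  define b where "b = cos \<eta>"
  have a_fun: "a = (\<lambda>s. xi s \<bullet> d)" and c_fun: "c = (\<lambda>s. v s \<bullet> d)"
    by (simp_all add: a_def c_def fun_eq_iff)
  have nd: "norm d = 1" and mub: "\<And>s. s \<in> I \<Longrightarrow> mu s \<bullet> d = b"
    using ax by (auto simp: mu_helix_axis_def b_def)
  have Mx: "\<And>s. s \<in> I \<Longrightarrow> norm (xi s) = 1 \<and> norm (v s) = 1 \<and> xi s \<bullet> v s = 0 \<and>
        mu s = cross3 (v s) (xi s) \<and>
        (xi has_vector_derivative (G s *\<^sub>R mu s + K s *\<^sub>R v s)) (at s) \<and>
        (mu has_vector_derivative (- G s *\<^sub>R xi s + T s *\<^sub>R v s)) (at s) \<and>
        (v has_vector_derivative (- K s *\<^sub>R xi s - T s *\<^sub>R mu s)) (at s)"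
    using M unfolding myller_configuration_def by blast
  have Npos: "\<And>s. s \<in> I \<Longrightarrow> N s > 0"
  proof -
    fix s assume "s \<in> I"
    then have "G s \<noteq> 0 \<or> T s \<noteq> 0" using GT by auto
    then show "N s > 0" unfolding N_def by (auto simp: sum_power2_gt_zero_iff)
  qed
  have dG: "\<And>s. s \<in> I \<Longrightarrow> (G has_real_derivative deriv G s) (at s)"
    and dT: "\<And>s. s \<in> I \<Longrightarrow> (T has_real_derivative deriv T s) (at s)"
    using smooth DERIV_deriv_iff_real_differentiable by blast+
  have da: "\<And>s. s \<in> I \<Longrightarrow> (a has_real_derivative (G s * b + K s * c s)) (at s)"
  proof -
    fix s assume s: "s \<in> I"
    have "((\<lambda>s. xi s \<bullet> d) has_real_derivative ((G s *\<^sub>R mu s + K s *\<^sub>R v s) \<bullet> d)) (at s)"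
      using Mx[OF s] inner_deriv by blast
    then show "(a has_real_derivative (G s * b + K s * c s)) (at s)"
      using mub[OF s] by (simp add: a_fun c_def inner_add_left)
  qed
  have dc: "\<And>s. s \<in> I \<Longrightarrow> (c has_real_derivative (- K s * a s - T s * b)) (at s)"
  proof -
    fix s assume s: "s \<in> I"
    have "((\<lambda>s. v s \<bullet> d) has_real_derivative ((- K s *\<^sub>R xi s - T s *\<^sub>R mu s) \<bullet> d)) (at s)"
      using Mx[OF s] inner_deriv by blast
    then show "(c has_real_derivative (- K s * a s - T s * b)) (at s)"
      using mub[OF s] by (simp add: a_def c_fun inner_diff_left)
  qed
  have rel: "\<And>s. s \<in> I \<Longrightarrow> G s * a s = T s * c s"
  proof -
    fix s assume s: "s \<in> I"
    have "((\<lambda>s. mu s \<bullet> d) has_real_derivative ((- G s *\<^sub>R xi s + T s *\<^sub>R v s) \<bullet> d)) (at s)"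
      using Mx[OF s] inner_deriv by blast
    then have d1: "((\<lambda>s. mu s \<bullet> d) has_real_derivative (- G s * a s + T s * c s)) (at s)"
      by (simp add: a_def c_def inner_add_left inner_diff_left)
    have d2: "((\<lambda>s. mu s \<bullet> d) has_real_derivative 0) (at s)"
      by (rule has_field_derivative_transform_within_open[of "\<lambda>_. b" 0 s I])
         (use s I mub in auto)
    show "G s * a s = T s * c s" using DERIV_unique[OF d1 d2] by simp
  qed
  have sq: "\<And>s. s \<in> I \<Longrightarrow> (a s)\<^sup>2 + (c s)\<^sup>2 = (sin \<eta>)\<^sup>2"
  proof -
    fix s assume s: "s \<in> I"
    note fr = frame(4)[of "xi s" "v s" "mu s" d]
    have e: "d = (d \<bullet> xi s) *\<^sub>R xi s + (d \<bullet> mu s) *\<^sub>R mu s + (d \<bullet> v s) *\<^sub>R v s"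
      using fr Mx[OF s] by blast
    have "d \<bullet> d = d \<bullet> ((d \<bullet> xi s) *\<^sub>R xi s + (d \<bullet> mu s) *\<^sub>R mu s + (d \<bullet> v s) *\<^sub>R v s)"
      by (rule arg_cong[where f="\<lambda>x. d \<bullet> x"], rule e)
    also have "\<dots> = (a s)\<^sup>2 + b\<^sup>2 + (c s)\<^sup>2"
      using mub[OF s] by (simp add: inner_add_right a_def c_def inner_commute power2_eq_square)
    finally have "1 = (a s)\<^sup>2 + b\<^sup>2 + (c s)\<^sup>2" using nd by (simp add: norm_eq_1)
    then show "(a s)\<^sup>2 + (c s)\<^sup>2 = (sin \<eta>)\<^sup>2" using sin_cos_squared_add[of \<eta>] unfolding b_def by linarith
  qed
  define l where "l s = (a s * T s + c s * G s) / N s" for s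
  have al: "\<And>s. s \<in> I \<Longrightarrow> a s = l s * T s" and cl: "\<And>s. s \<in> I \<Longrightarrow> c s = l s * G s"
  proof -
    fix s assume s: "s \<in> I"
    have Nz: "N s \<noteq> 0" using Npos[OF s] by simp
    have r: "G s * a s = T s * c s" using rel[OF s] .
    have "a s * N s = (a s * T s + c s * G s) * T s"
      unfolding N_def using r by (simp add: algebra_simps power2_eq_square)
    then show "a s = l s * T s" using Nz unfolding l_def by (simp add: field_simps)
    have "c s * N s = (a s * T s + c s * G s) * G s"
      unfolding N_def using r by (simp add: algebra_simps power2_eq_square)
    then show "c s = l s * G s" using Nz unfolding l_def by (simp add: field_simps)
  qed
  have lsq: "\<And>s. s \<in> I \<Longrightarrow> (l s)\<^sup>2 * N s = (sin \<eta>)\<^sup>2"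
    using sq al cl unfolding N_def by (simp add: power2_eq_square algebra_simps)
  have b2: "b\<^sup>2 = 1 - (sin \<eta>)\<^sup>2" using sin_cos_squared_add[of \<eta>] unfolding b_def by linarith
  have sinne: "sin \<eta> \<noteq> 0"
  proof
    assume s0: "sin \<eta> = 0"
    obtain s where s: "s \<in> I" using I by blast
    have l0: "\<And>s. s \<in> I \<Longrightarrow> l s = 0" using lsq Npos s0 by fastforce
    have a0: "\<And>s. s \<in> I \<Longrightarrow> a s = 0" and c0: "\<And>s. s \<in> I \<Longrightarrow> c s = 0" using al cl l0 by auto
    have "(a has_real_derivative 0) (at s)"
      by (rule has_field_derivative_transform_within_open[of "\<lambda>_. 0" 0 s I]) (use s I a0 in auto)
    then have "G s * b = 0" using DERIV_unique[OF da[OF s]] c0[OF s] by simp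
    moreover have "(c has_real_derivative 0) (at s)"
      by (rule has_field_derivative_transform_within_open[of "\<lambda>_. 0" 0 s I]) (use s I c0 in auto)
    then have "T s * b = 0" using DERIV_unique[OF dc[OF s]] a0[OF s] by force
    moreover have "b \<noteq> 0" using b2 s0 by auto
    ultimately show False using GT s by auto
  qed
  have lnz: "\<And>s. s \<in> I \<Longrightarrow> l s \<noteq> 0" using lsq sinne by fastforce
  have ldiff: "\<And>s. s \<in> I \<Longrightarrow> l differentiable (at s)"
  proof -
    fix s assume s: "s \<in> I"
    have "a differentiable (at s)" using da[OF s] real_differentiable_def by blast
    moreover have "c differentiable (at s)" using dc[OF s] real_differentiable_def by blast
    moreover have "G differentiable (at s)" "T differentiable (at s)" using smooth s by auto
    ultimately have "(\<lambda>s. (a s * T s + c s * G s) / ((G s)\<^sup>2 + (T s)\<^sup>2)) differentiable (at s)"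
      using Npos[OF s] unfolding N_def
      by (intro differentiable_divide differentiable_add differentiable_mult differentiable_power) auto
    then show "l differentiable (at s)" unfolding N_def by (simp add: l_def[abs_def] N_def)
  qed
  define L where "L s = deriv l s" for s
  have dl: "\<And>s. s \<in> I \<Longrightarrow> (l has_real_derivative L s) (at s)"
    unfolding L_def using ldiff DERIV_deriv_iff_real_differentiable by blast
  have e1: "\<And>s. s \<in> I \<Longrightarrow> G s * b + K s * c s = L s * T s + l s * deriv T s"
  proof -
    fix s assume s: "s \<in> I"
    have "((\<lambda>s. l s * T s) has_real_derivative (L s * T s + l s * deriv T s)) (at s)"
      using DERIV_mult[OF dl[OF s] dT[OF s]] by (simp add: mult.commute)
    then have "(a has_real_derivative (L s * T s + l s * deriv T s)) (at s)"
      by (rule has_field_derivative_transform_within_open[of _ _ s I]) (use s I al in auto)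
    then show "?thesis s" using DERIV_unique[OF da[OF s]] by simp
  qed
  have e2: "\<And>s. s \<in> I \<Longrightarrow> - K s * a s - T s * b = L s * G s + l s * deriv G s"
  proof -
    fix s assume s: "s \<in> I"
    have "((\<lambda>s. l s * G s) has_real_derivative (L s * G s + l s * deriv G s)) (at s)"
      using DERIV_mult[OF dl[OF s] dG[OF s]] by (simp add: mult.commute)
    then have "(c has_real_derivative (L s * G s + l s * deriv G s)) (at s)"
      by (rule has_field_derivative_transform_within_open[of _ _ s I]) (use s I cl in auto)
    then show "?thesis s" using DERIV_unique[OF dc[OF s]] by simp
  qed
  have key: "\<And>s. s \<in> I \<Longrightarrow> l s * (deriv T s * G s - T s * deriv G s - N s * K s) = N s * b"
  proof -
    fix s assume s: "s \<in> I"
    have x1: "G s * b + K s * (l s * G s) = L s * T s + l s * deriv T s" using e1[OF s] cl[OF s] by simp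
    have x2: "- K s * (l s * T s) - T s * b = L s * G s + l s * deriv G s" using e2[OF s] al[OF s] by simp
    show "?thesis s" unfolding N_def using x1 x2 by algebra
  qed
  have sig: "\<And>s. s \<in> I \<Longrightarrow> sigma_mu G K T s = b / (l s * sqrt (N s))"
  proof -
    fix s assume s: "s \<in> I"
    have "sigma_mu G K T s = (deriv T s * G s - T s * deriv G s - N s * K s) / (N s * sqrt (N s))"
      unfolding sigma_mu_def using powr32[OF Npos[OF s]] by (simp add: N_def)
    also have "\<dots> = (N s * b / l s) / (N s * sqrt (N s))"
    proof -
      have "deriv T s * G s - T s * deriv G s - N s * K s = N s * b / l s"
        using key[OF s] lnz[OF s] by (simp add: eq_divide_eq mult.commute)
      then show ?thesis by simp
    qed
    also have "\<dots> = b / (l s * sqrt (N s))"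
      using lnz[OF s] Npos[OF s] by (simp add: field_simps)
    finally show "?thesis s" .
  qed
  have lcont: "\<forall>s\<in>I. isCont l s" using ldiff differentiable_imp_continuous_within by blast
  have lq: "\<And>s. s \<in> I \<Longrightarrow> (l s * sqrt (N s))\<^sup>2 = (sin \<eta>)\<^sup>2"
    using lsq Npos by (simp add: power_mult_distrib less_imp_le)
  obtain s0 where s0: "s0 \<in> I" using I by blast
  have absq: "\<And>s. s \<in> I \<Longrightarrow> \<bar>l s * sqrt (N s)\<bar> = \<bar>sin \<eta>\<bar>"
  proof -
    fix s assume s: "s \<in> I"
    have "\<bar>l s * sqrt (N s)\<bar> = sqrt ((l s * sqrt (N s))\<^sup>2)" by (simp only: real_sqrt_abs)
    also have "\<dots> = sqrt ((sin \<eta>)\<^sup>2)" using lq[OF s] by simp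
    also have "\<dots> = \<bar>sin \<eta>\<bar>" by (simp only: real_sqrt_abs)
    finally show "\<bar>l s * sqrt (N s)\<bar> = \<bar>sin \<eta>\<bar>" .
  qed
  have "\<exists>k. (k = sin \<eta> \<or> k = - sin \<eta>) \<and> (\<forall>s\<in>I. l s * sqrt (N s) = k)"
  proof (cases "l s0 > 0")
    case True
    have "\<forall>s\<in>I. l s > 0" using sign_const[OF I(1) lcont] lnz s0 True by blast
    then have "\<forall>s\<in>I. l s * sqrt (N s) = \<bar>sin \<eta>\<bar>"
    proof (intro ballI)
      fix s assume "\<forall>s\<in>I. l s > 0" and s: "s \<in> I"
      then have "l s * sqrt (N s) > 0" using Npos[OF s] by simp
      then show "l s * sqrt (N s) = \<bar>sin \<eta>\<bar>" using absq[OF s] by simp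
    qed
    then show ?thesis by (cases "sin \<eta> \<ge> 0") auto
  next
    case False
    then have "(\<lambda>s. - l s) s0 > 0" using lnz s0 by force
    moreover have "\<forall>s\<in>I. isCont (\<lambda>s. - l s) s" using lcont by simp
    ultimately have "\<forall>s\<in>I. - l s > 0" using sign_const[OF I(1), of "\<lambda>s. - l s"] lnz s0 by auto
    then have "\<forall>s\<in>I. - (l s * sqrt (N s)) = \<bar>sin \<eta>\<bar>"
    proof (intro ballI)
      fix s assume "\<forall>s\<in>I. - l s > 0" and s: "s \<in> I"
      then have "l s * sqrt (N s) < 0" using Npos[OF s] by (simp add: mult_neg_pos)
      then show "- (l s * sqrt (N s)) = \<bar>sin \<eta>\<bar>" using absq[OF s] by simp
    qed
    then have "\<forall>s\<in>I. l s * sqrt (N s) = - \<bar>sin \<eta>\<bar>" by (metis minus_minus)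
    then show ?thesis by (cases "sin \<eta> \<ge> 0") auto
  qed
  then obtain k where k: "k = sin \<eta> \<or> k = - sin \<eta>" "\<forall>s\<in>I. l s * sqrt (N s) = k" by blast
  show ?thesis using k(1)
  proof
    assume "k = sin \<eta>"
    then have "\<forall>s\<in>I. cot \<eta> = sigma_mu G K T s" using sig k(2) by (simp add: cot_def b_def)
    then show ?thesis by blast
  next
    assume "k = - sin \<eta>"
    then have "\<forall>s\<in>I. cot \<eta> = - sigma_mu G K T s" using sig k(2) by (simp add: cot_def b_def)
    then show ?thesis by blast
  qed
qed
lemma bwd:
  fixes I :: "real set"
    and r xi mu v :: "real \<Rightarrow> real^3"
    and G K T :: "real \<Rightarrow> real"
  assumes I: "is_interval I" "open I" "I \<noteq> {}"
    and M: "myller_configuration I r xi mu v G K T"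
    and smooth: "\<forall>s\<in>I. G differentiable (at s) \<and> T differentiable (at s) \<and> isCont K s"
    and GT: "\<forall>s\<in>I. (G s, T s) \<noteq> (0, 0)"
    and sc: "\<forall>s\<in>I. sigma_mu G K T s = c0"
  shows "mu_helix I mu"
proof -
  define N where "N s = (G s)\<^sup>2 + (T s)\<^sup>2" for s
  have Mx: "\<And>s. s \<in> I \<Longrightarrow> norm (xi s) = 1 \<and> norm (v s) = 1 \<and> xi s \<bullet> v s = 0 \<and>
        mu s = cross3 (v s) (xi s) \<and>
        (xi has_vector_derivative (G s *\<^sub>R mu s + K s *\<^sub>R v s)) (at s) \<and>
        (mu has_vector_derivative (- G s *\<^sub>R xi s + T s *\<^sub>R v s)) (at s) \<and>
        (v has_vector_derivative (- K s *\<^sub>R xi s - T s *\<^sub>R mu s)) (at s)"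
    using M unfolding myller_configuration_def by blast
  have Npos: "\<And>s. s \<in> I \<Longrightarrow> N s > 0"
  proof -
    fix s assume "s \<in> I"
    then have "G s \<noteq> 0 \<or> T s \<noteq> 0" using GT by auto
    then show "N s > 0" unfolding N_def by (auto simp: sum_power2_gt_zero_iff)
  qed
  have dG: "\<And>s. s \<in> I \<Longrightarrow> (G has_real_derivative deriv G s) (at s)"
    and dT: "\<And>s. s \<in> I \<Longrightarrow> (T has_real_derivative deriv T s) (at s)"
    using smooth DERIV_deriv_iff_real_differentiable by blast+
  have orth: "\<And>s. s \<in> I \<Longrightarrow> xi s \<bullet> xi s = 1 \<and> v s \<bullet> v s = 1 \<and> mu s \<bullet> mu s = 1 \<and>
      xi s \<bullet> v s = 0 \<and> v s \<bullet> xi s = 0 \<and> mu s \<bullet> xi s = 0 \<and> xi s \<bullet> mu s = 0 \<and>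
      mu s \<bullet> v s = 0 \<and> v s \<bullet> mu s = 0"
  proof -
    fix s assume s: "s \<in> I"
    have f: "norm (mu s) = 1" "mu s \<bullet> xi s = 0" "mu s \<bullet> v s = 0"
      using frame(1-3)[of "xi s" "v s" "mu s"] Mx[OF s] by auto
    then show "?thesis s" using Mx[OF s] by (simp add: norm_eq_1 inner_commute)
  qed
  define q where "q s = sqrt (N s)" for s
  have qpos: "\<And>s. s \<in> I \<Longrightarrow> q s > 0" using Npos by (simp add: q_def)
  have qsq: "\<And>s. s \<in> I \<Longrightarrow> (q s)\<^sup>2 = N s" using Npos by (simp add: q_def less_imp_le)
  have c0eq: "\<And>s. s \<in> I \<Longrightarrow> c0 * (N s * q s) = deriv T s * G s - T s * deriv G s - N s * K s"
  proof -
    fix s assume s: "s \<in> I"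
    have "c0 = (deriv T s * G s - T s * deriv G s - N s * K s) / (N s * q s)"
      using sc s powr32[OF Npos[OF s]] unfolding sigma_mu_def by (auto simp: N_def q_def)
    then show "?thesis s" using Npos[OF s] qpos[OF s] by (simp add: field_simps)
  qed
  define S where "S = 1 / sqrt (1 + c0\<^sup>2)"
  define Co where "Co = c0 * S"
  define l where "l s = S / q s" for s
  define L where "L s = - S * (G s * deriv G s + T s * deriv T s) / (N s * q s)" for s
  have dl: "\<And>s. s \<in> I \<Longrightarrow> (l has_real_derivative L s) (at s)"
  proof -
    fix s assume s: "s \<in> I"
    have dN: "((\<lambda>s. (G s)\<^sup>2 + (T s)\<^sup>2) has_real_derivative
        (2 * G s * deriv G s + 2 * T s * deriv T s)) (at s)"
      using dG[OF s] dT[OF s] by (auto intro!: derivative_eq_intros)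
    have dq: "((\<lambda>s. sqrt ((G s)\<^sup>2 + (T s)\<^sup>2)) has_real_derivative
        (2 * G s * deriv G s + 2 * T s * deriv T s) * (inverse (sqrt (N s)) / 2)) (at s)"
      using DERIV_chain2[OF DERIV_real_sqrt dN] Npos[OF s] by (simp add: N_def mult.commute)
    define Dq where "Dq = (2 * G s * deriv G s + 2 * T s * deriv T s) * (inverse (sqrt (N s)) / 2)"
    have "((\<lambda>s. S / sqrt ((G s)\<^sup>2 + (T s)\<^sup>2)) has_real_derivative
        (0 * sqrt ((G s)\<^sup>2 + (T s)\<^sup>2) - S * Dq) / (sqrt ((G s)\<^sup>2 + (T s)\<^sup>2) * sqrt ((G s)\<^sup>2 + (T s)\<^sup>2))) (at s)"
      by (rule DERIV_divide[OF DERIV_const dq[folded Dq_def]]) (use GT s in auto)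
    moreover have "l = (\<lambda>s. S / sqrt ((G s)\<^sup>2 + (T s)\<^sup>2))"
      by (simp add: fun_eq_iff l_def q_def N_def)
    moreover have "(0 * sqrt ((G s)\<^sup>2 + (T s)\<^sup>2) - S * Dq) / (sqrt ((G s)\<^sup>2 + (T s)\<^sup>2) * sqrt ((G s)\<^sup>2 + (T s)\<^sup>2)) = L s"
    proof -
      have "(0 * sqrt ((G s)\<^sup>2 + (T s)\<^sup>2) - S * Dq) / (sqrt ((G s)\<^sup>2 + (T s)\<^sup>2) * sqrt ((G s)\<^sup>2 + (T s)\<^sup>2))
         = - S * Dq / (sqrt (N s) * sqrt (N s))" by (simp add: N_def)
      also have "\<dots> = L s" using Npos[OF s] unfolding L_def q_def Dq_def by (simp add: field_simps)
      finally show ?thesis .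
    qed
    ultimately show "(l has_real_derivative L s) (at s)" by simp
  qed
  define D where "D s = (l s * T s) *\<^sub>R xi s + Co *\<^sub>R mu s + (l s * G s) *\<^sub>R v s" for s
  have D_fun: "D = (\<lambda>s. (l s * T s) *\<^sub>R xi s + Co *\<^sub>R mu s + (l s * G s) *\<^sub>R v s)"
    by (simp add: fun_eq_iff D_def)
  have dD: "\<And>s. s \<in> I \<Longrightarrow> (D has_vector_derivative 0) (at s)"
  proof -
    fix s assume s: "s \<in> I"
    define E where "E = ((l s * T s) *\<^sub>R (G s *\<^sub>R mu s + K s *\<^sub>R v s) + (L s * T s + deriv T s * l s) *\<^sub>R xi s)
       + (Co *\<^sub>R (- G s *\<^sub>R xi s + T s *\<^sub>R v s) + 0 *\<^sub>R mu s)
       + ((l s * G s) *\<^sub>R (- K s *\<^sub>R xi s - T s *\<^sub>R mu s) + (L s * G s + deriv G s * l s) *\<^sub>R v s)"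
    have hD: "(D has_vector_derivative E) (at s)"
      unfolding E_def D_fun
      by (intro has_vector_derivative_add has_vector_derivative_scaleR DERIV_mult dl[OF s] dT[OF s] dG[OF s]
          DERIV_const) (use Mx[OF s] in auto)
    have o: "xi s \<bullet> xi s = 1" "v s \<bullet> v s = 1" "mu s \<bullet> mu s = 1"
      "xi s \<bullet> v s = 0" "v s \<bullet> xi s = 0" "mu s \<bullet> xi s = 0" "xi s \<bullet> mu s = 0"
      "mu s \<bullet> v s = 0" "v s \<bullet> mu s = 0" using orth[OF s] by auto
    have Nq: "N s * q s \<noteq> 0" using Npos[OF s] qpos[OF s] by simp
    have c0e: "c0 * (N s * q s) = deriv T s * G s - T s * deriv G s - N s * K s" using c0eq[OF s] .
    have b1: "- (G s * deriv G s + T s * deriv T s) * T s + deriv T s * N s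
        - G s * (c0 * (N s * q s)) - G s * K s * N s = 0"
      unfolding c0e unfolding N_def by algebra
    have b2: "- (G s * deriv G s + T s * deriv T s) * G s + deriv G s * N s
        + T s * (c0 * (N s * q s)) + T s * K s * N s = 0"
      unfolding c0e unfolding N_def by algebra
    have x1: "E \<bullet> xi s = 0"
    proof -
      have "E \<bullet> xi s = L s * T s + deriv T s * l s - Co * G s - l s * G s * K s"
        unfolding E_def by (simp add: inner_add_left inner_diff_left o algebra_simps)
      also have "\<dots> = S / (N s * q s) * (- (G s * deriv G s + T s * deriv T s) * T s + deriv T s * N s
        - G s * (c0 * (N s * q s)) - G s * K s * N s)"
        using Nq unfolding L_def l_def Co_def by (simp add: field_simps)
      also have "\<dots> = 0" using b1 by simp
      finally show ?thesis .
    qed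
    have x2: "E \<bullet> v s = 0"
    proof -
      have "E \<bullet> v s = l s * T s * K s + Co * T s + L s * G s + deriv G s * l s"
        unfolding E_def by (simp add: inner_add_left inner_diff_left o algebra_simps)
      also have "\<dots> = S / (N s * q s) * (- (G s * deriv G s + T s * deriv T s) * G s + deriv G s * N s
        + T s * (c0 * (N s * q s)) + T s * K s * N s)"
        using Nq unfolding L_def l_def Co_def by (simp add: field_simps)
      also have "\<dots> = 0" using b2 by simp
      finally show ?thesis .
    qed
    have x3: "E \<bullet> mu s = 0"
      unfolding E_def by (simp add: inner_add_left inner_diff_left o algebra_simps)
    have "E = 0"
      using frame(4)[of "xi s" "v s" "mu s" E] Mx[OF s] x1 x2 x3 by (simp add: inner_commute)
    then show "(D has_vector_derivative 0) (at s)" using hD by simp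
  qed
  obtain d0 where d0: "\<And>s. s \<in> I \<Longrightarrow> D s = d0"
    using has_vector_derivative_zero_constant[of I D] is_interval_convex[OF I(1)]
      dD has_vector_derivative_at_within by blast
  obtain s0 where s0: "s0 \<in> I" using I by blast
  have S2: "S\<^sup>2 * (1 + c0\<^sup>2) = 1"
  proof -
    have p: "1 + c0\<^sup>2 > 0" by (metis add_pos_nonneg zero_less_one zero_le_power2)
    then show ?thesis unfolding S_def by (simp add: power_divide)
  qed
  have Co_abs: "\<bar>Co\<bar> \<le> 1"
  proof -
    have "\<bar>c0\<bar> \<le> sqrt (1 + c0\<^sup>2)" using real_sqrt_abs[of c0] real_sqrt_le_mono[of "c0\<^sup>2" "1 + c0\<^sup>2"]
      by simp
    moreover have "1 + c0\<^sup>2 > 0" by (metis add_pos_nonneg zero_less_one zero_le_power2)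
    ultimately show ?thesis unfolding Co_def S_def by (simp add: abs_mult divide_le_eq_1 abs_div)
  qed
  have cosCo: "cos (arccos Co) = Co" using Co_abs by (intro cos_arccos) auto
  have "norm d0 = 1"
  proof -
    have "d0 \<bullet> d0 = D s0 \<bullet> D s0" using d0[OF s0] by simp
    also have "\<dots> = (l s0)\<^sup>2 * N s0 + Co\<^sup>2"
      using orth[OF s0] unfolding D_def N_def
      by (simp add: inner_add_left inner_add_right power2_eq_square algebra_simps)
    also have "\<dots> = S\<^sup>2 * (1 + c0\<^sup>2)"
      using qsq[OF s0] qpos[OF s0] Npos[OF s0] unfolding l_def Co_def by (simp add: field_simps power2_eq_square)
    finally show ?thesis using S2 by (simp add: norm_eq_1)
  qed
  moreover have "\<forall>s\<in>I. mu s \<bullet> d0 = cos (arccos Co)"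
  proof
    fix s assume s: "s \<in> I"
    have "mu s \<bullet> d0 = mu s \<bullet> D s" using d0[OF s] by simp
    also have "\<dots> = Co" using orth[OF s] unfolding D_def by (simp add: inner_add_right)
    finally show "mu s \<bullet> d0 = cos (arccos Co)" using cosCo by simp
  qed
  ultimately show ?thesis unfolding mu_helix_def mu_helix_axis_def by blast
qed
theorem theorem17:
  fixes I :: "real set"
    and r xi mu v :: "real \<Rightarrow> real^3"
    and G K T :: "real \<Rightarrow> real"
  assumes I: "is_interval I" "open I" "I \<noteq> {}"
    and M: "myller_configuration I r xi mu v G K T"
    and smooth: "\<forall>s\<in>I. G differentiable (at s) \<and> T differentiable (at s) \<and> isCont K s"
    and GT: "\<forall>s\<in>I. (G s, T s) \<noteq> (0, 0)"
  shows "(mu_helix I mu \<longleftrightarrow> (\<exists>c. \<forall>s\<in>I. sigma_mu G K T s = c))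
         \<and> (\<forall>d \<eta>. mu_helix_axis I mu d \<eta> \<longrightarrow>
               (\<forall>s\<in>I. cot \<eta> = sigma_mu G K T s) \<or> (\<forall>s\<in>I. cot \<eta> = - sigma_mu G K T s))"
proof (intro conjI allI impI iffI)
  fix d \<eta> assume "mu_helix_axis I mu d \<eta>"
  then show "(\<forall>s\<in>I. cot \<eta> = sigma_mu G K T s) \<or> (\<forall>s\<in>I. cot \<eta> = - sigma_mu G K T s)"
    using fwd[OF I M smooth GT] by blast
next
  assume "mu_helix I mu"
  then obtain d \<eta> where ax: "mu_helix_axis I mu d \<eta>" unfolding mu_helix_def by blast
  from fwd[OF I M smooth GT ax]
  show "\<exists>c. \<forall>s\<in>I. sigma_mu G K T s = c"
  proof
    assume "\<forall>s\<in>I. cot \<eta> = sigma_mu G K T s"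
    then show ?thesis by (metis)
  next
    assume "\<forall>s\<in>I. cot \<eta> = - sigma_mu G K T s"
    then have "\<forall>s\<in>I. sigma_mu G K T s = - cot \<eta>" by auto
    then show ?thesis by blast
  qed
next
  assume "\<exists>c. \<forall>s\<in>I. sigma_mu G K T s = c"
  then obtain c0 where "\<forall>s\<in>I. sigma_mu G K T s = c0" by blast
  then show "mu_helix I mu" using bwd[OF I M smooth GT] by blast
qed

end
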